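(* Let $G$ be a locally compact abelian group (written additively) not reduced to its neutral element, $E$ an $\mathbb{R}$-group, and $\mathcal{H}=(H_\varepsilon)_{\varepsilon\in E}$ a continuous absorptive action of $E$ on $G$ compatible with the group operation ($H_\varepsilon(x+y)=H_\varepsilon(x)+H_\varepsilon(y)$). For $\varepsilon\in E$ let $\widehat H_\varepsilon:\widehat G\to\widehat G$ be defined by $\langle\widehat H_\varepsilon(\gamma),x\rangle=\langle\gamma,H_\varepsilon(x)\rangle$ ($\gamma\in\widehat G$, $x\in G$). Then $\widehat{\mathcal{H}}=(\widehat H_\varepsilon)_{\varepsilon\in E}$ is a continuous absorptive action of $E$ on $\widehat G$.
   Context: $\widehat G$ is the dual group of $G$ (continuous homomorphisms $G\to\{z\in\mathbb{C}:|z|=1\}$) with pointwise multiplication and the topology of compact convergence; $\langle\gamma,x\rangle$ is the value of $\gamma$ at $x$. An $\mathbb{R}$-group is an abelian group $E$ (operation written multiplicatively) whose underlying set is a subset of $\mathbb{R}$ containing all positive integers, such that: (RG1) with the natural order of $\mathbb{R}$, $E$ is a totally ordered group; (RG2) with the topology induced from $\mathbb{R}$, $E$ is a locally compact group; (RG3) there is a nonconstant continuous homomorphism $h:E\to\mathbb{R}_+^*$ such that for every $\alpha\in E$ the set $\{\varepsilon\in E:\varepsilon\ge\alpha\}$ is integrable for $h\cdot m$, $m$ a Haar measure on $E$. $e$ is the identity of $E$, $\varepsilon^{-1}$ the group inverse; inequalities refer to the order of $\mathbb{R}$. An action of $E$ on a space $X$ is a family $(H_\varepsilon)_{\varepsilon\in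 E}$ of bijections of $X$ with $H_\varepsilon\circ H_{\varepsilon'}=H_{\varepsilon\varepsilon'}$, $H_e=\mathrm{id}_X$; continuous if $(\varepsilon,x)\mapsto H_\varepsilon(x)$ is continuous on $E\times X$; absorptive if some $\omega\in X$ satisfies: for every neighbourhood $V$ of $\omega$ and every $x\in X$ there are a neighbourhood $U$ of $x$ and $\alpha\in E$ with $H_{\varepsilon^{-1}}(U)\subset V$ for all $\varepsilon\le\alpha$. *)

theory Defs
  imports "HOL-Probability.Probability" "HOL-Algebra.Group"
begin

text \<open>Haar measure on an R-group E (a subset of the reals with its own group law):
  a Borel measure on the carrier, invariant under translations, finite on compact sets
  and positive on nonempty open sets.  (The carrier is a second countable locally compact
  Hausdorff space, so such measures are automatically Radon.)\<close>
definition haar_measure :: "real monoid \<Rightarrow> real measure \<Rightarrow> bool" where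
  "haar_measure E m \<longleftrightarrow>
     sets m = sets (restrict_space borel (carrier E)) \<and>
     (\<forall>a\<in>carrier E. \<forall>A\<in>sets m. emeasure m ((\<lambda>x. a \<otimes>\<^bsub>E\<^esub> x) ` A) = emeasure m A) \<and>
     (\<forall>K. compact K \<and> K \<subseteq> carrier E \<longrightarrow> emeasure m K < \<infinity>) \<and>
     (\<forall>U. openin (top_of_set (carrier E)) U \<and> U \<noteq> {} \<longrightarrow> emeasure m U > 0)"

definition R_group :: "real monoid \<Rightarrow> bool" where
  "R_group E \<longleftrightarrow>
     comm_group E \<and>
     {real n | n. n \<ge> 1} \<subseteq> carrier E \<and>
     \<comment> \<open>(RG1) totally ordered group w.r.t. the natural order of the reals\<close>
     (\<forall>a\<in>carrier E. \<forall>b\<in>carrier E. \<forall>c\<in>carrier E.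
         a \<le> b \<longrightarrow> a \<otimes>\<^bsub>E\<^esub> c \<le> b \<otimes>\<^bsub>E\<^esub> c) \<and>
     \<comment> \<open>(RG2) locally compact topological group for the induced topology\<close>
     continuous_on (carrier E \<times> carrier E) (\<lambda>(a, b). a \<otimes>\<^bsub>E\<^esub> b) \<and>
     continuous_on (carrier E) (\<lambda>a. inv\<^bsub>E\<^esub> a) \<and>
     locally_compact_space (top_of_set (carrier E)) \<and>
     \<comment> \<open>(RG3)\<close>
     (\<exists>h :: real \<Rightarrow> real.
         continuous_on (carrier E) h \<and>
         (\<forall>a\<in>carrier E. h a > 0) \<and>
         (\<forall>a\<in>carrier E. \<forall>b\<in>carrier E. h (a \<otimes>\<^bsub>E\<^esub> b) = h a * h b) \<and>
         (\<exists>a\<in>carrier E. \<exists>b\<in>carrier E. h a \<noteq> h b) \<and>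
         (\<exists>m. haar_measure E m \<and>
              (\<forall>\<alpha>\<in>carrier E.
                 emeasure (density m (\<lambda>x. ennreal (h x))) {\<epsilon>\<in>carrier E. \<epsilon> \<ge> \<alpha>} < \<infinity>)))"

definition is_action :: "real monoid \<Rightarrow> 'x topology \<Rightarrow> (real \<Rightarrow> 'x \<Rightarrow> 'x) \<Rightarrow> bool" where
  "is_action E X H \<longleftrightarrow>
     (\<forall>\<epsilon>\<in>carrier E. bij_betw (H \<epsilon>) (topspace X) (topspace X)) \<and>
     (\<forall>\<epsilon>\<in>carrier E. \<forall>\<epsilon>'\<in>carrier E. \<forall>x\<in>topspace X. H \<epsilon> (H \<epsilon>' x) = H (\<epsilon> \<otimes>\<^bsub>E\<^esub> \<epsilon>') x) \<and>
     (\<forall>x\<in>topspace X. H \<one>\<^bsub>E\<^esub> x = x)"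

definition continuous_action :: "real monoid \<Rightarrow> 'x topology \<Rightarrow> (real \<Rightarrow> 'x \<Rightarrow> 'x) \<Rightarrow> bool" where
  "continuous_action E X H \<longleftrightarrow> is_action E X H \<and>
     continuous_map (prod_topology (top_of_set (carrier E)) X) X (\<lambda>(\<epsilon>, x). H \<epsilon> x)"

definition absorptive_action :: "real monoid \<Rightarrow> 'x topology \<Rightarrow> (real \<Rightarrow> 'x \<Rightarrow> 'x) \<Rightarrow> bool" where
  "absorptive_action E X H \<longleftrightarrow> is_action E X H \<and>
     (\<exists>\<omega>\<in>topspace X. \<forall>V. (\<exists>W. openin X W \<and> \<omega> \<in> W \<and> W \<subseteq> V) \<and> V \<subseteq> topspace X \<longrightarrow>
        (\<forall>x\<in>topspace X. \<exists>U \<alpha>. (\<exists>W. openin X W \<and> x \<in> W \<and> W \<subseteq> U) \<and> U \<subseteq> topspace X \<and>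
            \<alpha> \<in> carrier E \<and>
            (\<forall>\<epsilon>\<in>carrier E. \<epsilon> \<le> \<alpha> \<longrightarrow> H (inv\<^bsub>E\<^esub> \<epsilon>) ` U \<subseteq> V)))"

definition dual_group :: "('g::topological_ab_group_add \<Rightarrow> complex) set" where
  "dual_group = {\<gamma>. continuous_on UNIV \<gamma> \<and> (\<forall>x y. \<gamma> (x + y) = \<gamma> x * \<gamma> y) \<and>
                     (\<forall>x. cmod (\<gamma> x) = 1)}"

definition dual_topology :: "('g::topological_ab_group_add \<Rightarrow> complex) topology" where
  "dual_topology = topology (\<lambda>U. U \<subseteq> dual_group \<and>
     (\<forall>\<gamma>\<in>U. \<exists>K e. compact K \<and> e > 0 \<and>
        {\<psi>\<in>dual_group. \<forall>x\<in>K. cmod (\<psi> x - \<gamma> x) < e} \<subseteq> U))"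

end

theory Submission
  imports Defs
begin
definition bset :: "('g::topological_ab_group_add \<Rightarrow> complex) \<Rightarrow> 'g set \<Rightarrow> real \<Rightarrow> ('g \<Rightarrow> complex) set" where
  "bset \<gamma> K e = {\<psi>\<in>dual_group. \<forall>x\<in>K. cmod (\<psi> x - \<gamma> x) < e}"

lemma istop_dual: "istopology (\<lambda>U. U \<subseteq> (dual_group::('g::topological_ab_group_add \<Rightarrow> complex) set) \<and>
     (\<forall>\<gamma>\<in>U. \<exists>K e. compact K \<and> e > 0 \<and>
        {\<psi>\<in>dual_group. \<forall>x\<in>K. cmod (\<psi> x - \<gamma> x) < e} \<subseteq> U))"
  unfolding istopology_def
proof (rule conjI; intro allI impI)
  fix S T :: "('g \<Rightarrow> complex) set"
  assume S: "S \<subseteq> dual_group \<and> (\<forall>\<gamma>\<in>S. \<exists>K e. compact K \<and> e > 0 \<and> {\<psi>\<in>dual_group. \<forall>x\<in>K. cmod (\<psi> x - \<gamma> x) < e} \<subseteq> S)"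
     and T: "T \<subseteq> dual_group \<and> (\<forall>\<gamma>\<in>T. \<exists>K e. compact K \<and> e > 0 \<and> {\<psi>\<in>dual_group. \<forall>x\<in>K. cmod (\<psi> x - \<gamma> x) < e} \<subseteq> T)"
  show "S \<inter> T \<subseteq> dual_group \<and> (\<forall>\<gamma>\<in>S \<inter> T. \<exists>K e. compact K \<and> e > 0 \<and> {\<psi>\<in>dual_group. \<forall>x\<in>K. cmod (\<psi> x - \<gamma> x) < e} \<subseteq> S \<inter> T)"
  proof (intro conjI ballI)
    show "S \<inter> T \<subseteq> dual_group" using S by blast
    fix \<gamma> assume g: "\<gamma> \<in> S \<inter> T"
    obtain K1 e1 where 1: "compact K1" "e1 > 0" "{\<psi>\<in>dual_group. \<forall>x\<in>K1. cmod (\<psi> x - \<gamma> x) < e1} \<subseteq> S"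
      using S g by blast
    obtain K2 e2 where 2: "compact K2" "e2 > 0" "{\<psi>\<in>dual_group. \<forall>x\<in>K2. cmod (\<psi> x - \<gamma> x) < e2} \<subseteq> T"
      using T g by blast
    show "\<exists>K e. compact K \<and> e > 0 \<and> {\<psi>\<in>dual_group. \<forall>x\<in>K. cmod (\<psi> x - \<gamma> x) < e} \<subseteq> S \<inter> T"
      apply (rule exI[of _ "K1 \<union> K2"], rule exI[of _ "min e1 e2"])
      using 1 2 by auto
  qed
next
  fix \<K> :: "('g \<Rightarrow> complex) set set"
  assume "\<forall>K\<in>\<K>. K \<subseteq> dual_group \<and> (\<forall>\<gamma>\<in>K. \<exists>Ka e. compact Ka \<and> e > 0 \<and> {\<psi>\<in>dual_group. \<forall>x\<in>Ka. cmod (\<psi> x - \<gamma> x) < e} \<subseteq> K)"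
  then show "\<Union>\<K> \<subseteq> dual_group \<and> (\<forall>\<gamma>\<in>\<Union>\<K>. \<exists>K e. compact K \<and> e > 0 \<and> {\<psi>\<in>dual_group. \<forall>x\<in>K. cmod (\<psi> x - \<gamma> x) < e} \<subseteq> \<Union>\<K>)"
    by (meson Sup_upper2 Union_least UnionE)
qed

lemma openin_dual: "openin dual_topology U \<longleftrightarrow> U \<subseteq> dual_group \<and> (\<forall>\<gamma>\<in>U. \<exists>K e. compact K \<and> e > 0 \<and> bset \<gamma> K e \<subseteq> U)"
proof -
  have "openin dual_topology = (\<lambda>U. U \<subseteq> (dual_group::('a::topological_ab_group_add \<Rightarrow> complex) set) \<and>
     (\<forall>\<gamma>\<in>U. \<exists>K e. compact K \<and> e > 0 \<and>
        {\<psi>\<in>dual_group. \<forall>x\<in>K. cmod (\<psi> x - \<gamma> x) < e} \<subseteq> U))"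
    unfolding dual_topology_def by (rule topology_inverse'[OF istop_dual])
  then show ?thesis unfolding bset_def by simp
qed

lemma topspace_dual: "topspace dual_topology = dual_group"
proof -
  have "openin dual_topology dual_group"
    unfolding openin_dual bset_def by (auto intro!: exI[of _ "{}"] exI[of _ 1])
  then show ?thesis using openin_dual openin_subset by (metis openin_topspace subset_antisym)
qed

lemma dual_cont: "\<gamma> \<in> dual_group \<Longrightarrow> continuous_on UNIV \<gamma>"
  and dual_hom: "\<gamma> \<in> dual_group \<Longrightarrow> \<gamma> (x + y) = \<gamma> x * \<gamma> y"
  and dual_norm: "\<gamma> \<in> dual_group \<Longrightarrow> cmod (\<gamma> x) = 1"
  by (auto simp: dual_group_def)

lemma dual_zero: "\<gamma> \<in> dual_group \<Longrightarrow> \<gamma> 0 = 1"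
proof -
  assume g: "\<gamma> \<in> dual_group"
  have "\<gamma> 0 = \<gamma> 0 * \<gamma> 0" using dual_hom[OF g, of 0 0] by simp
  moreover have "\<gamma> 0 \<noteq> 0" using dual_norm[OF g, of 0] by auto
  ultimately show ?thesis by (metis mult_cancel_left1)
qed

lemma one_dual: "(\<lambda>_. 1) \<in> dual_group"
  by (auto simp: dual_group_def)

lemma dual_comp: "\<gamma> \<in> dual_group \<Longrightarrow> continuous_on UNIV h \<Longrightarrow> (\<And>x y. h (x + y) = h x + h y) \<Longrightarrow> \<gamma> \<circ> h \<in> dual_group"
  unfolding dual_group_def by (auto intro: continuous_on_compose2)

lemma bset_open:
  assumes g: "\<gamma> \<in> dual_group" and K: "compact K" and e: "e > 0"
  shows "openin dual_topology (bset \<gamma> K e)" and "\<gamma> \<in> bset \<gamma> K e"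
proof -
  show "\<gamma> \<in> bset \<gamma> K e" using g e by (simp add: bset_def)
  show "openin dual_topology (bset \<gamma> K e)"
    unfolding openin_dual
  proof (intro conjI ballI)
    show "bset \<gamma> K e \<subseteq> dual_group" by (auto simp: bset_def)
    fix \<psi> assume p: "\<psi> \<in> bset \<gamma> K e"
    show "\<exists>K' e'. compact K' \<and> e' > 0 \<and> bset \<psi> K' e' \<subseteq> bset \<gamma> K e"
    proof (cases "K = {}")
      case True then show ?thesis using p e by (auto simp: bset_def)
    next
      case False
      have c: "continuous_on K (\<lambda>x. cmod (\<psi> x - \<gamma> x))"
        using p g by (auto simp: bset_def intro!: continuous_intros intro: continuous_on_subset dest!: dual_cont)
      obtain x0 where x0: "x0 \<in> K" "\<forall>x\<in>K. cmod (\<psi> x - \<gamma> x) \<le> cmod (\<psi> x0 - \<gamma> x0)"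
        using continuous_attains_sup[OF K False c] by blast
      have lt: "cmod (\<psi> x0 - \<gamma> x0) < e" using p x0 by (auto simp: bset_def)
      show ?thesis
      proof (intro exI conjI)
        show "compact K" by fact
        show "e - cmod (\<psi> x0 - \<gamma> x0) > 0" using lt by simp
        show "bset \<psi> K (e - cmod (\<psi> x0 - \<gamma> x0)) \<subseteq> bset \<gamma> K e"
        proof
          fix \<phi> assume f: "\<phi> \<in> bset \<psi> K (e - cmod (\<psi> x0 - \<gamma> x0))"
          { fix x assume x: "x \<in> K"
            have "cmod (\<phi> x - \<gamma> x) \<le> cmod (\<phi> x - \<psi> x) + cmod (\<psi> x - \<gamma> x)"
              using norm_triangle_ineq[of "\<phi> x - \<psi> x" "\<psi> x - \<gamma> x"] by simp
            also have "\<dots> < e" using f x x0 by (force simp: bset_def)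
            finally have "cmod (\<phi> x - \<gamma> x) < e" . }
          then show "\<phi> \<in> bset \<gamma> K e" using f by (auto simp: bset_def)
        qed
      qed
    qed
  qed
qed

lemma unif:
  fixes g :: "real \<times> 'g::topological_space \<Rightarrow> complex"
  assumes c: "continuous_on (S \<times> UNIV) g" and e0: "e0 \<in> S" and K: "compact K" and e: "e > 0"
  shows "\<exists>N. open N \<and> e0 \<in> N \<and> (\<forall>\<epsilon>\<in>N\<inter>S. \<forall>x\<in>K. cmod (g(\<epsilon>,x) - g(e0,x)) < e)"
proof -
  have "\<forall>x\<in>K. \<exists>A B. open A \<and> open B \<and> e0 \<in> A \<and> x \<in> B \<and> (\<forall>p\<in>(A\<times>B)\<inter>(S\<times>UNIV). dist (g p) (g (e0,x)) < e/2)"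
  proof
    fix x assume x: "x\<in>K"
    obtain Ob where Ob: "open Ob" "Ob \<inter> (S\<times>UNIV) = g -` ball (g(e0,x)) (e/2) \<inter> (S\<times>UNIV)"
      using c unfolding continuous_on_open_invariant by (meson open_ball)
    have "(e0,x) \<in> Ob" using Ob(2) e0 e by auto
    then obtain A B where AB: "open A" "open B" "(e0,x) \<in> A\<times>B" "A\<times>B \<subseteq> Ob" by (rule open_prod_elim[OF Ob(1)])
    have "\<forall>p\<in>(A\<times>B)\<inter>(S\<times>UNIV). dist (g p) (g (e0,x)) < e/2"
    proof
      fix p assume "p \<in> (A\<times>B)\<inter>(S\<times>UNIV)"
      then have "p \<in> Ob \<inter> (S\<times>UNIV)" using AB by auto
      then show "dist (g p) (g (e0,x)) < e/2" using Ob(2) by (auto simp: dist_commute)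
    qed
    then show "\<exists>A B. open A \<and> open B \<and> e0 \<in> A \<and> x \<in> B \<and> (\<forall>p\<in>(A\<times>B)\<inter>(S\<times>UNIV). dist (g p) (g (e0,x)) < e/2)"
      using AB by blast
  qed
  then obtain A B where AB: "\<forall>x\<in>K. open (A x) \<and> open (B x) \<and> e0 \<in> A x \<and> x \<in> B x \<and> (\<forall>p\<in>(A x \<times> B x)\<inter>(S\<times>UNIV). dist (g p) (g (e0,x)) < e/2)"
    by metis
  obtain D where D: "D \<subseteq> K" "finite D" "K \<subseteq> (\<Union>x\<in>D. B x)"
    using compactE_image[OF K, of K B] AB by blast
  show ?thesis
  proof (intro exI[of _ "\<Inter>x\<in>D. A x"] conjI ballI)
    show "open (\<Inter>x\<in>D. A x)" using D AB by (intro open_INT) auto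
    show "e0 \<in> (\<Inter>x\<in>D. A x)" using D AB by auto
    fix \<epsilon> x assume ep: "\<epsilon> \<in> (\<Inter>x\<in>D. A x) \<inter> S" and x: "x \<in> K"
    obtain y where y: "y \<in> D" "x \<in> B y" using D x by auto
    have 1: "dist (g(\<epsilon>,x)) (g(e0,y)) < e/2" using AB y D ep by blast
    have 2: "dist (g(e0,x)) (g(e0,y)) < e/2" using AB y D e0 by blast
    have "dist (g(\<epsilon>,x)) (g(e0,x)) < e" using dist_triangle_half_l[OF 1 2] .
    then show "cmod (g(\<epsilon>,x) - g(e0,x)) < e" by (simp add: dist_norm)
  qed
qed

theorem proposition5p2:
  fixes E :: "real monoid"
    and H :: "real \<Rightarrow> 'g::{topological_ab_group_add, t2_space} \<Rightarrow> 'g"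
  assumes "locally_compact_space (euclidean :: 'g topology)"
    and "\<exists>x::'g. x \<noteq> 0"
    and "R_group E"
    and "continuous_action E euclidean H"
    and "absorptive_action E euclidean H"
    and "\<forall>\<epsilon>\<in>carrier E. \<forall>x y. H \<epsilon> (x + y) = H \<epsilon> x + H \<epsilon> y"
  shows "continuous_action E dual_topology (\<lambda>\<epsilon> \<gamma>. \<gamma> \<circ> H \<epsilon>) \<and>
         absorptive_action E dual_topology (\<lambda>\<epsilon> \<gamma>. \<gamma> \<circ> H \<epsilon>)"
proof -
  from assms(3) have comm: "comm_group E" and lc: "locally_compact_space (top_of_set (carrier E))"
    unfolding R_group_def by auto
  interpret E: comm_group E by fact
  from assms(4) have act: "is_action E euclidean H"
    and cH: "continuous_map (prod_topology (top_of_set (carrier E)) euclidean) euclidean (\<lambda>(\<epsilon>,x). H \<epsilon> x)"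
    by (auto simp: continuous_action_def)
  have cH': "continuous_on (carrier E \<times> UNIV) (\<lambda>(\<epsilon>,x). H \<epsilon> x)"
    using cH by (metis prod_topology_subtopology_eu subtopology_UNIV continuous_map_iff_continuous)
  have comp: "\<And>\<epsilon> \<epsilon>' x. \<epsilon>\<in>carrier E \<Longrightarrow> \<epsilon>'\<in>carrier E \<Longrightarrow> H \<epsilon> (H \<epsilon>' x) = H (\<epsilon> \<otimes>\<^bsub>E\<^esub> \<epsilon>') x"
    and one: "\<And>x. H \<one>\<^bsub>E\<^esub> x = x"
    using act by (auto simp: is_action_def)
  have cHe: "continuous_on UNIV (H \<epsilon>)" if "\<epsilon> \<in> carrier E" for \<epsilon>
  proof -
    have "continuous_on UNIV (\<lambda>x. (\<lambda>(\<epsilon>,x). H \<epsilon> x) (\<epsilon>, x))"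
      by (rule continuous_on_compose2[OF cH']) (use that in \<open>auto intro!: continuous_intros\<close>)
    then show ?thesis by simp
  qed
  have add: "\<And>\<epsilon> x y. \<epsilon>\<in>carrier E \<Longrightarrow> H \<epsilon> (x + y) = H \<epsilon> x + H \<epsilon> y" using assms(6) by blast
  have dmap: "\<gamma> \<circ> H \<epsilon> \<in> dual_group" if "\<epsilon> \<in> carrier E" "\<gamma> \<in> dual_group" for \<epsilon> \<gamma>
    using dual_comp[OF that(2) cHe[OF that(1)]] add[OF that(1)] by blast
  have isact: "is_action E dual_topology (\<lambda>\<epsilon> \<gamma>. \<gamma> \<circ> H \<epsilon>)"
    unfolding is_action_def topspace_dual
  proof (intro conjI ballI)
    fix \<epsilon> assume e: "\<epsilon> \<in> carrier E"
    have ie: "inv\<^bsub>E\<^esub> \<epsilon> \<in> carrier E" using e by simp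
    show "bij_betw (\<lambda>\<gamma>. \<gamma> \<circ> H \<epsilon>) dual_group dual_group"
    proof (rule bij_betwI[where g = "\<lambda>\<gamma>. \<gamma> \<circ> H (inv\<^bsub>E\<^esub> \<epsilon>)"])
      show "(\<lambda>\<gamma>. \<gamma> \<circ> H \<epsilon>) \<in> dual_group \<rightarrow> dual_group" using dmap e by blast
      show "(\<lambda>\<gamma>. \<gamma> \<circ> H (inv\<^bsub>E\<^esub> \<epsilon>)) \<in> dual_group \<rightarrow> dual_group" using dmap ie by blast
      fix \<gamma>
      show "\<gamma> \<circ> H \<epsilon> \<circ> H (inv\<^bsub>E\<^esub> \<epsilon>) = \<gamma>"
        by (rule ext) (simp add: comp[OF e ie] one e)
      show "\<gamma> \<circ> H (inv\<^bsub>E\<^esub> \<epsilon>) \<circ> H \<epsilon> = \<gamma>"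
        by (rule ext) (simp add: comp[OF ie e] one e)
    qed
  next
    fix \<epsilon> \<epsilon>' \<gamma> assume e: "\<epsilon> \<in> carrier E" and e': "\<epsilon>' \<in> carrier E"
    show "\<gamma> \<circ> H \<epsilon>' \<circ> H \<epsilon> = \<gamma> \<circ> H (\<epsilon> \<otimes>\<^bsub>E\<^esub> \<epsilon>')"
      by (rule ext) (simp add: comp[OF e' e] E.m_comm[OF e e'])
  next
    fix \<gamma> :: "'g \<Rightarrow> complex"
    show "\<gamma> \<circ> H \<one>\<^bsub>E\<^esub> = \<gamma>" by (rule ext) (simp add: one)
  qed
  have cont: "continuous_map (prod_topology (top_of_set (carrier E)) dual_topology) dual_topology
                (\<lambda>(\<epsilon>, \<gamma>). \<gamma> \<circ> H \<epsilon>)"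
    unfolding continuous_map_eq_topcontinuous_at
  proof (intro ballI)
    fix p :: "real \<times> ('g \<Rightarrow> complex)" assume "p \<in> topspace (prod_topology (top_of_set (carrier E)) dual_topology)"
    then obtain \<epsilon>0 \<gamma>0 where p: "p = (\<epsilon>0, \<gamma>0)" and e0: "\<epsilon>0 \<in> carrier E" and g0: "\<gamma>0 \<in> dual_group"
      by (auto simp: topspace_dual)
    show "topcontinuous_at (prod_topology (top_of_set (carrier E)) dual_topology) dual_topology (\<lambda>(\<epsilon>, \<gamma>). \<gamma> \<circ> H \<epsilon>) p"
      unfolding topcontinuous_at_def
    proof (intro conjI allI impI)
      show "p \<in> topspace (prod_topology (top_of_set (carrier E)) dual_topology)"
        using p e0 g0 by (simp add: topspace_dual)
      show "(\<lambda>(\<epsilon>, \<gamma>). \<gamma> \<circ> H \<epsilon>) \<in> topspace (prod_topology (top_of_set (carrier E)) dual_topology) \<rightarrow> topspace dual_topology"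
        using dmap by (auto simp: topspace_dual)
      fix V assume V: "openin dual_topology V \<and> (case p of (\<epsilon>, \<gamma>) \<Rightarrow> \<gamma> \<circ> H \<epsilon>) \<in> V"
      then obtain K e where Ke: "compact K" "e > 0" "bset (\<gamma>0 \<circ> H \<epsilon>0) K e \<subseteq> V"
        unfolding openin_dual p by auto
      obtain U C where UC: "openin (top_of_set (carrier E)) U" "compactin (top_of_set (carrier E)) C"
        "\<epsilon>0 \<in> U" "U \<subseteq> C"
        using lc e0 unfolding locally_compact_space_def by auto
      have C: "compact C" "C \<subseteq> carrier E" using UC(2) by (auto simp: compactin_subtopology)
      have UE: "U \<subseteq> carrier E" using UC(1) by (meson openin_imp_subset)
      define K' where "K' = (\<lambda>(\<epsilon>,x). H \<epsilon> x) ` (C \<times> K)"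
      have K': "compact K'" unfolding K'_def
        by (rule compact_continuous_image[OF continuous_on_subset[OF cH']]) (use C Ke in \<open>auto intro: compact_Times\<close>)
      have cg: "continuous_on (carrier E \<times> UNIV) (\<lambda>q. \<gamma>0 ((\<lambda>(\<epsilon>,x). H \<epsilon> x) q))"
        by (rule continuous_on_compose2[OF dual_cont[OF g0] cH']) auto
      obtain N where N: "open N" "\<epsilon>0 \<in> N"
        "\<forall>\<epsilon>\<in>N\<inter>carrier E. \<forall>x\<in>K. cmod (\<gamma>0 (H \<epsilon> x) - \<gamma>0 (H \<epsilon>0 x)) < e/2"
        using unif[OF cg e0 Ke(1), of "e/2"] Ke(2) by auto
      show "\<exists>W. openin (prod_topology (top_of_set (carrier E)) dual_topology) W \<and> p \<in> W \<and>
               (\<forall>y\<in>W. (case y of (\<epsilon>, \<gamma>) \<Rightarrow> \<gamma> \<circ> H \<epsilon>) \<in> V)"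
      proof (intro exI conjI)
        show "openin (prod_topology (top_of_set (carrier E)) dual_topology) ((U \<inter> N) \<times> bset \<gamma>0 K' (e/2))"
          unfolding openin_prod_Times_iff
          using openin_Int_open[OF UC(1) N(1)] bset_open(1)[OF g0 K'] Ke(2) by simp
        show "p \<in> (U \<inter> N) \<times> bset \<gamma>0 K' (e/2)"
          using p UC(3) N(2) bset_open(2)[OF g0 K'] Ke(2) by simp
        show "\<forall>y\<in>(U \<inter> N) \<times> bset \<gamma>0 K' (e/2). (case y of (\<epsilon>, \<gamma>) \<Rightarrow> \<gamma> \<circ> H \<epsilon>) \<in> V"
        proof (clarify)
          fix \<epsilon> \<gamma> assume eU: "\<epsilon> \<in> U" and eN: "\<epsilon> \<in> N" and gb: "\<gamma> \<in> bset \<gamma>0 K' (e/2)"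
          have eE: "\<epsilon> \<in> carrier E" using eU UE by auto
          have gd: "\<gamma> \<in> dual_group" using gb by (simp add: bset_def)
          have "\<gamma> \<circ> H \<epsilon> \<in> bset (\<gamma>0 \<circ> H \<epsilon>0) K e"
            unfolding bset_def
          proof (intro CollectI conjI ballI)
            show "\<gamma> \<circ> H \<epsilon> \<in> dual_group" using dmap eE gd by blast
            fix x assume x: "x \<in> K"
            have "H \<epsilon> x \<in> K'" unfolding K'_def using eU UC(4) x by force
            then have 1: "cmod (\<gamma> (H \<epsilon> x) - \<gamma>0 (H \<epsilon> x)) < e/2" using gb by (simp add: bset_def)
            have 2: "cmod (\<gamma>0 (H \<epsilon> x) - \<gamma>0 (H \<epsilon>0 x)) < e/2" using N(3) eN eE x by blast
            have "cmod (\<gamma> (H \<epsilon> x) - \<gamma>0 (H \<epsilon>0 x)) \<le> cmod (\<gamma> (H \<epsilon> x) - \<gamma>0 (H \<epsilon> x)) + cmod (\<gamma>0 (H \<epsilon> x) - \<gamma>0 (H \<epsilon>0 x))"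
              using norm_triangle_ineq[of "\<gamma> (H \<epsilon> x) - \<gamma>0 (H \<epsilon> x)" "\<gamma>0 (H \<epsilon> x) - \<gamma>0 (H \<epsilon>0 x)"] by simp
            then show "cmod ((\<gamma> \<circ> H \<epsilon>) x - (\<gamma>0 \<circ> H \<epsilon>0) x) < e" using 1 2 by simp
          qed
          then show "\<gamma> \<circ> H \<epsilon> \<in> V" using Ke(3) by blast
        qed
      qed
    qed
  qed
  from assms(5) have "\<exists>\<omega>\<in>topspace euclidean. \<forall>V. (\<exists>W. openin euclidean W \<and> \<omega> \<in> W \<and> W \<subseteq> V) \<and> V \<subseteq> topspace euclidean \<longrightarrow>
        (\<forall>x\<in>topspace euclidean. \<exists>U \<alpha>. (\<exists>W. openin euclidean W \<and> x \<in> W \<and> W \<subseteq> U) \<and> U \<subseteq> topspace euclidean \<and>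
            \<alpha> \<in> carrier E \<and>
            (\<forall>\<epsilon>\<in>carrier E. \<epsilon> \<le> \<alpha> \<longrightarrow> H (inv\<^bsub>E\<^esub> \<epsilon>) ` U \<subseteq> V))"
    unfolding absorptive_action_def by (rule conjunct2)
  then obtain \<omega> where "\<omega> \<in> topspace euclidean" and \<omega>: "\<forall>V. (\<exists>W. openin euclidean W \<and> \<omega> \<in> W \<and> W \<subseteq> V) \<and> V \<subseteq> topspace euclidean \<longrightarrow>
        (\<forall>x\<in>topspace euclidean. \<exists>U \<alpha>. (\<exists>W. openin euclidean W \<and> x \<in> W \<and> W \<subseteq> U) \<and> U \<subseteq> topspace euclidean \<and>
            \<alpha> \<in> carrier E \<and>
            (\<forall>\<epsilon>\<in>carrier E. \<epsilon> \<le> \<alpha> \<longrightarrow> H (inv\<^bsub>E\<^esub> \<epsilon>) ` U \<subseteq> V))"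
    by (rule bexE)
  have ab: "\<exists>U \<alpha>. (\<exists>W. open W \<and> x \<in> W \<and> W \<subseteq> U) \<and>
            \<alpha> \<in> carrier E \<and> (\<forall>\<epsilon>\<in>carrier E. \<epsilon> \<le> \<alpha> \<longrightarrow> H (inv\<^bsub>E\<^esub> \<epsilon>) ` U \<subseteq> V)"
    if "\<exists>W. open W \<and> \<omega> \<in> W \<and> W \<subseteq> V" for V x
  proof -
    have hV: "(\<exists>W. openin euclidean W \<and> \<omega> \<in> W \<and> W \<subseteq> V) \<and> V \<subseteq> topspace euclidean" using that by simp
    have "\<exists>U \<alpha>. (\<exists>W. openin euclidean W \<and> x \<in> W \<and> W \<subseteq> U) \<and> U \<subseteq> topspace euclidean \<and>
            \<alpha> \<in> carrier E \<and> (\<forall>\<epsilon>\<in>carrier E. \<epsilon> \<le> \<alpha> \<longrightarrow> H (inv\<^bsub>E\<^esub> \<epsilon>) ` U \<subseteq> V)"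
      using bspec[OF mp[OF spec[OF \<omega>] hV], of x] by simp
    then show ?thesis by (metis open_openin)
  qed
  have H0: "H \<epsilon> 0 = 0" if "\<epsilon> \<in> carrier E" for \<epsilon>
    using add[OF that, of 0 0] by (metis add.right_neutral add_left_cancel)
  have om: "\<omega> = 0"
  proof (rule ccontr)
    assume "\<omega> \<noteq> 0"
    then have "\<exists>W. open W \<and> \<omega> \<in> W \<and> W \<subseteq> - {0}" by (intro exI[of _ "-{0}"]) auto
    from ab[OF this, of 0] obtain U \<alpha> where "0 \<in> U" "\<alpha> \<in> carrier E"
      "\<forall>\<epsilon>\<in>carrier E. \<epsilon> \<le> \<alpha> \<longrightarrow> H (inv\<^bsub>E\<^esub> \<epsilon>) ` U \<subseteq> - {0}" by blast
    then have "H (inv\<^bsub>E\<^esub> \<alpha>) 0 \<noteq> 0" by blast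
    then show False using H0 \<open>\<alpha> \<in> carrier E\<close> by simp
  qed
  have absK: "\<exists>\<alpha>\<in>carrier E. \<forall>\<epsilon>\<in>carrier E. \<epsilon> \<le> \<alpha> \<longrightarrow> H (inv\<^bsub>E\<^esub> \<epsilon>) ` K \<subseteq> C"
    if K: "compact K" and hW: "open W" "0 \<in> W" "W \<subseteq> C" for K C W
  proof -
    have "\<forall>x\<in>K. \<exists>W \<alpha>. open W \<and> x \<in> W \<and> \<alpha> \<in> carrier E \<and> (\<forall>\<epsilon>\<in>carrier E. \<epsilon> \<le> \<alpha> \<longrightarrow> H (inv\<^bsub>E\<^esub> \<epsilon>) ` W \<subseteq> C)"
    proof
      fix x
      have "\<exists>W. open W \<and> \<omega> \<in> W \<and> W \<subseteq> C" using hW om by blast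
      from ab[OF this, of x] obtain U \<alpha> where hU: "\<exists>W. open W \<and> x \<in> W \<and> W \<subseteq> U" "\<alpha> \<in> carrier E"
        "\<forall>\<epsilon>\<in>carrier E. \<epsilon> \<le> \<alpha> \<longrightarrow> H (inv\<^bsub>E\<^esub> \<epsilon>) ` U \<subseteq> C" by blast
      from hU(1) obtain W' where W': "open W'" "x \<in> W'" "W' \<subseteq> U" by blast
      have "\<forall>\<epsilon>\<in>carrier E. \<epsilon> \<le> \<alpha> \<longrightarrow> H (inv\<^bsub>E\<^esub> \<epsilon>) ` W' \<subseteq> C"
      proof (intro ballI impI)
        fix \<epsilon> assume "\<epsilon> \<in> carrier E" "\<epsilon> \<le> \<alpha>"
        then have "H (inv\<^bsub>E\<^esub> \<epsilon>) ` U \<subseteq> C" using hU(3) by blast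
        moreover have "H (inv\<^bsub>E\<^esub> \<epsilon>) ` W' \<subseteq> H (inv\<^bsub>E\<^esub> \<epsilon>) ` U" using W'(3) by (rule image_mono)
        ultimately show "H (inv\<^bsub>E\<^esub> \<epsilon>) ` W' \<subseteq> C" by (rule subset_trans[rotated])
      qed
      then show "\<exists>W \<alpha>. open W \<and> x \<in> W \<and> \<alpha> \<in> carrier E \<and> (\<forall>\<epsilon>\<in>carrier E. \<epsilon> \<le> \<alpha> \<longrightarrow> H (inv\<^bsub>E\<^esub> \<epsilon>) ` W \<subseteq> C)"
        using W'(1,2) hU(2) by blast
    qed
    then obtain Wf af where Wf: "\<forall>x\<in>K. open (Wf x) \<and> x \<in> Wf x \<and> af x \<in> carrier E \<and>
        (\<forall>\<epsilon>\<in>carrier E. \<epsilon> \<le> af x \<longrightarrow> H (inv\<^bsub>E\<^esub> \<epsilon>) ` Wf x \<subseteq> C)" by metis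
    obtain D where D: "D \<subseteq> K" "finite D" "K \<subseteq> (\<Union>x\<in>D. Wf x)"
      using compactE_image[OF K, of K Wf] Wf by blast
    define \<alpha> where "\<alpha> = Min (insert \<one>\<^bsub>E\<^esub> (af ` D))"
    have fin: "finite (insert \<one>\<^bsub>E\<^esub> (af ` D))" using D by simp
    have aE: "\<alpha> \<in> carrier E"
    proof -
      have "insert \<one>\<^bsub>E\<^esub> (af ` D) \<subseteq> carrier E" using Wf D by auto
      then show ?thesis using Min_in[OF fin] unfolding \<alpha>_def by blast
    qed
    show ?thesis
    proof (intro bexI[OF _ aE] ballI impI)
      fix \<epsilon> assume e: "\<epsilon> \<in> carrier E" "\<epsilon> \<le> \<alpha>"
      show "H (inv\<^bsub>E\<^esub> \<epsilon>) ` K \<subseteq> C"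
      proof
        fix y assume "y \<in> H (inv\<^bsub>E\<^esub> \<epsilon>) ` K"
        then obtain x where x: "y = H (inv\<^bsub>E\<^esub> \<epsilon>) x" "x \<in> K" by (rule imageE)
        then obtain z where z: "z \<in> D" "x \<in> Wf z" using D by blast
        have "\<alpha> \<le> af z" unfolding \<alpha>_def using fin z by (intro Min_le) auto
        have zK: "z \<in> K" using z D by blast
        have "\<forall>\<epsilon>\<in>carrier E. \<epsilon> \<le> af z \<longrightarrow> H (inv\<^bsub>E\<^esub> \<epsilon>) ` Wf z \<subseteq> C" using Wf zK by blast
        moreover have "\<epsilon> \<le> af z" using e(2) \<open>\<alpha> \<le> af z\<close> by linarith
        ultimately have "H (inv\<^bsub>E\<^esub> \<epsilon>) ` Wf z \<subseteq> C" using e(1) by blast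
        moreover have "H (inv\<^bsub>E\<^esub> \<epsilon>) x \<in> H (inv\<^bsub>E\<^esub> \<epsilon>) ` Wf z" using z(2) by (rule imageI)
        ultimately show "y \<in> C" unfolding x(1) by (rule subsetD)
      qed
    qed
  qed
  have absorb: "absorptive_action E dual_topology (\<lambda>\<epsilon> \<gamma>. \<gamma> \<circ> H \<epsilon>)"
    unfolding absorptive_action_def
  proof (intro conjI isact bexI[of _ "\<lambda>_. 1"] allI impI ballI)
    show "(\<lambda>_. 1) \<in> topspace dual_topology" using one_dual by (simp add: topspace_dual)
    fix V and \<gamma> :: "'g \<Rightarrow> complex"
    assume V: "(\<exists>W. openin dual_topology W \<and> (\<lambda>_::'g. 1::complex) \<in> W \<and> W \<subseteq> V) \<and> V \<subseteq> topspace dual_topology"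
      and g: "\<gamma> \<in> topspace dual_topology"
    have g: "\<gamma> \<in> dual_group" using g by (simp add: topspace_dual)
    from V obtain W where W: "openin dual_topology W" "(\<lambda>_::'g. 1::complex) \<in> W" "W \<subseteq> V" by blast
    have "\<exists>K e. compact K \<and> e > 0 \<and> bset (\<lambda>_::'g. 1::complex) K e \<subseteq> W"
      using W(1,2) unfolding openin_dual by blast
    then obtain K e where Ke: "compact K" "e > 0" "bset (\<lambda>_. 1) K e \<subseteq> V"
      using W(3) by blast
    obtain W0 C0 :: "'g set" where WC: "open W0" "compact C0" "0 \<in> W0" "W0 \<subseteq> C0"
      using assms(1) unfolding locally_compact_space_def by (metis compactin_euclidean_iff open_openin topspace_euclidean UNIV_I)
    define C1 where "C1 = C0 \<inter> {y. cmod (\<gamma> y - 1) \<le> e/3}"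
    define W1 where "W1 = W0 \<inter> {y. cmod (\<gamma> y - 1) < e/3}"
    have cg: "continuous_on UNIV \<gamma>" by (rule dual_cont[OF g])
    have C1: "compact C1" unfolding C1_def
      by (intro compact_Int_closed WC closed_Collect_le continuous_intros continuous_on_subset[OF cg]) auto
    have W1: "open W1" unfolding W1_def
      by (intro open_Int WC open_Collect_less continuous_intros continuous_on_subset[OF cg]) auto
    have "0 \<in> W1" using WC(3) dual_zero[OF g] Ke(2) unfolding W1_def by simp
    moreover have "W1 \<subseteq> C1" using WC(4) unfolding W1_def C1_def by auto
    ultimately obtain \<alpha> where a: "\<alpha> \<in> carrier E" "\<forall>\<epsilon>\<in>carrier E. \<epsilon> \<le> \<alpha> \<longrightarrow> H (inv\<^bsub>E\<^esub> \<epsilon>) ` K \<subseteq> C1"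
      using absK[OF Ke(1) W1] by blast
    have e3: "e/3 > 0" using Ke(2) by simp
    show "\<exists>U \<alpha>. (\<exists>W. openin dual_topology W \<and> \<gamma> \<in> W \<and> W \<subseteq> U) \<and> U \<subseteq> topspace dual_topology \<and>
            \<alpha> \<in> carrier E \<and> (\<forall>\<epsilon>\<in>carrier E. \<epsilon> \<le> \<alpha> \<longrightarrow> (\<lambda>\<gamma>. \<gamma> \<circ> H (inv\<^bsub>E\<^esub> \<epsilon>)) ` U \<subseteq> V)"
    proof (rule exI[of _ "bset \<gamma> C1 (e/3)"], rule exI[of _ \<alpha>], intro conjI a(1) ballI impI)
      show "\<exists>W. openin dual_topology W \<and> \<gamma> \<in> W \<and> W \<subseteq> bset \<gamma> C1 (e/3)"
        using bset_open[OF g C1 e3] by blast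
      show "bset \<gamma> C1 (e/3) \<subseteq> topspace dual_topology" by (auto simp: bset_def topspace_dual)
      fix \<epsilon> assume e: "\<epsilon> \<in> carrier E" "\<epsilon> \<le> \<alpha>"
      have ie: "inv\<^bsub>E\<^esub> \<epsilon> \<in> carrier E" using e by simp
      show "(\<lambda>\<gamma>. \<gamma> \<circ> H (inv\<^bsub>E\<^esub> \<epsilon>)) ` bset \<gamma> C1 (e/3) \<subseteq> V"
      proof
        fix \<phi> assume "\<phi> \<in> (\<lambda>\<gamma>. \<gamma> \<circ> H (inv\<^bsub>E\<^esub> \<epsilon>)) ` bset \<gamma> C1 (e/3)"
        then obtain \<psi> where ps: "\<psi> \<in> bset \<gamma> C1 (e/3)" "\<phi> = \<psi> \<circ> H (inv\<^bsub>E\<^esub> \<epsilon>)" by blast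
        have "\<phi> \<in> bset (\<lambda>_. 1) K e"
          unfolding bset_def
        proof (intro CollectI conjI ballI)
          show "\<phi> \<in> dual_group" using ps dmap ie by (auto simp: bset_def)
          fix x assume x: "x \<in> K"
          have yC: "H (inv\<^bsub>E\<^esub> \<epsilon>) x \<in> C1" using a(2) e x by blast
          let ?y = "H (inv\<^bsub>E\<^esub> \<epsilon>) x"
          have 1: "cmod (\<psi> ?y - \<gamma> ?y) < e/3" using ps yC by (simp add: bset_def)
          have 2: "cmod (\<gamma> ?y - 1) \<le> e/3" using yC by (simp add: C1_def)
          have "cmod (\<psi> ?y - 1) \<le> cmod (\<psi> ?y - \<gamma> ?y) + cmod (\<gamma> ?y - 1)"
            using norm_triangle_ineq[of "\<psi> ?y - \<gamma> ?y" "\<gamma> ?y - 1"] by simp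
          then show "cmod (\<phi> x - 1) < e" using 1 2 ps(2) Ke(2) by simp
        qed
        then show "\<phi> \<in> V" using Ke(3) by blast
      qed
    qed
  qed
  show ?thesis using cont isact absorb by (simp add: continuous_action_def)
qed

end
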